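(* Let $n>m=0$, $d\ge1$, $a\in\mathbb{C}^\times$, and $f_a(x_2,\dots,x_n)=\sum_{i=2}^nx_i^d+a/\prod_{i=2}^nx_i^d$. Then: (1) $f_a$ is convenient, i.e. the origin lies in the interior of $\Delta(f_a)$; (2) $\Delta(f_a)$ is the set of $(u_2,\dots,u_n)\in\mathbb{R}^{n-1}$ satisfying $h_{n+1}:=\sum_{i=2}^nu_i\le d$ and $h_{i_0}:=\sum_{i=2}^nu_i-n\,u_{i_0}\le d$ for $2\le i_0\le n$; (3) $f_a$ is non-degenerate with respect to $\Delta(f_a)$.
   Context: For a Laurent polynomial $g=\sum_\tau c(\tau)z^\tau$ in $N$ variables, $\mathrm{Supp}(g)=\{\tau:c(\tau)\ne0\}$, the Newton polytope $\Delta(g)$ is the convex hull of $\mathrm{Supp}(g)\cup\{0\}$ in $\mathbb{R}^N$, and $g$ is non-degenerate with respect to $\Delta(g)$ if for each face $\sigma$ of $\Delta(g)$ not containing $0$, $g_\sigma=\sum_{\tau\in\sigma\cap\mathbb{Z}^N}c(\tau)z^\tau$ has no critical point in $(\mathbb{C}^\times)^N$. A monomial $\prod x_i^{u_i}$ is identified with the lattice point $(u_2,\dots,u_n)$. *)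

theory Defs
  imports "HOL-Analysis.Analysis"
begin

text \<open>Laurent polynomials in the variables indexed by the finite type 'n, given by
  their coefficient function on the lattice int^'n (finite support assumed where needed).\<close>

definition lsupp :: "(int^'n \<Rightarrow> complex) \<Rightarrow> (int^'n) set" where
  "lsupp c = {\<tau>. c \<tau> \<noteq> 0}"

definition lat_to_real :: "int^'n \<Rightarrow> real^'n" where
  "lat_to_real \<tau> = (\<chi> j. real_of_int (\<tau> $ j))"

definition newton_polytope :: "(int^'n::finite \<Rightarrow> complex) \<Rightarrow> (real^'n) set" where
  "newton_polytope c = convex hull (lat_to_real ` lsupp c \<union> {0})"

definition laurent_eval :: "(int^'n::finite \<Rightarrow> complex) \<Rightarrow> complex^'n \<Rightarrow> complex" where
  "laurent_eval c z = (\<Sum>\<tau>\<in>lsupp c. c \<tau> * (\<Prod>j\<in>UNIV. (z $ j) powi (\<tau> $ j)))"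

definition face_part :: "(int^'n \<Rightarrow> complex) \<Rightarrow> (real^'n) set \<Rightarrow> (int^'n \<Rightarrow> complex)" where
  "face_part c \<sigma> = (\<lambda>\<tau>. if lat_to_real \<tau> \<in> \<sigma> then c \<tau> else 0)"

definition critical_point_torus :: "(int^'n::finite \<Rightarrow> complex) \<Rightarrow> complex^'n \<Rightarrow> bool" where
  "critical_point_torus c z \<longleftrightarrow> (\<forall>j. z $ j \<noteq> 0) \<and>
     (\<forall>j. ((\<lambda>w. laurent_eval c (\<chi> k. if k = j then w else z $ k)) has_field_derivative 0) (at (z $ j)))"

definition convenient :: "(int^'n::finite \<Rightarrow> complex) \<Rightarrow> bool" where
  "convenient c \<longleftrightarrow> 0 \<in> interior (newton_polytope c)"

text \<open>Non-degeneracy w.r.t. the Newton polytope; faces are taken nonempty (the empty face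
  would give the zero polynomial).\<close>
definition nondegenerate :: "(int^'n::finite \<Rightarrow> complex) \<Rightarrow> bool" where
  "nondegenerate c \<longleftrightarrow> (\<forall>\<sigma>. \<sigma> face_of newton_polytope c \<and> \<sigma> \<noteq> {} \<and> 0 \<notin> \<sigma> \<longrightarrow>
       \<not> (\<exists>z. critical_point_torus (face_part c \<sigma>) z))"

text \<open>f_a = sum_j x_j^d + a / prod_j x_j^d, as a coefficient function.\<close>
definition f_coeff :: "nat \<Rightarrow> complex \<Rightarrow> int^'n \<Rightarrow> complex" where
  "f_coeff d a \<tau> = (if \<exists>j. \<tau> = (\<chi> k. if k = j then int d else 0) then 1 else 0)
                  + (if \<tau> = (\<chi> k. - int d) then a else 0)"

end

theory Submission
  imports Defs
begin

lemma deriv_single: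
  fixes g :: "int^'n::finite \<Rightarrow> complex" and z :: "complex^'n"
  assumes fin: "finite (lsupp g)" and t0: "t0 \<in> lsupp g"
    and oth: "\<forall>t\<in>lsupp g - {t0}. t $ j = 0" and nz: "t0 $ j \<noteq> 0"
    and zn: "\<forall>k. z $ k \<noteq> 0"
  shows "\<not> ((\<lambda>w. laurent_eval g (\<chi> k. if k = j then w else z $ k)) has_field_derivative 0) (at (z $ j))"
proof
  assume D: "((\<lambda>w. laurent_eval g (\<chi> k. if k = j then w else z $ k)) has_field_derivative 0) (at (z $ j))"
  define P where "P = (\<Prod>k\<in>UNIV - {j}. z $ k powi (t0 $ k))"
  define B where "B = (\<Sum>t\<in>lsupp g - {t0}. g t * (\<Prod>k\<in>UNIV. z $ k powi (t $ k)))"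
  have eq: "laurent_eval g (\<chi> k. if k = j then w else z $ k) = g t0 * P * w powi (t0 $ j) + B" for w
  proof -
    have "laurent_eval g (\<chi> k. if k = j then w else z $ k)
       = g t0 * (\<Prod>k\<in>UNIV. (\<chi> k. if k = j then w else z $ k) $ k powi (t0 $ k))
         + (\<Sum>t\<in>lsupp g - {t0}. g t * (\<Prod>k\<in>UNIV. (\<chi> k. if k = j then w else z $ k) $ k powi (t $ k)))"
      unfolding laurent_eval_def using fin t0 by (simp add: sum.remove)
    also have "(\<Prod>k\<in>UNIV. (\<chi> k. if k = j then w else z $ k) $ k powi (t0 $ k)) = w powi (t0 $ j) * P"
      unfolding P_def by (subst prod.remove[of UNIV j]) (auto intro!: prod.cong)
    also have "(\<Sum>t\<in>lsupp g - {t0}. g t * (\<Prod>k\<in>UNIV. (\<chi> k. if k = j then w else z $ k) $ k powi (t $ k))) = B"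
      unfolding B_def
    proof (intro sum.cong refl)
      fix t assume "t \<in> lsupp g - {t0}"
      then have "t $ j = 0" using oth by auto
      then show "g t * (\<Prod>k\<in>UNIV. (\<chi> k. if k = j then w else z $ k) $ k powi (t $ k)) = g t * (\<Prod>k\<in>UNIV. z $ k powi (t $ k))"
        by (auto intro!: prod.cong)
    qed
    finally show ?thesis by (simp add: algebra_simps)
  qed
  have D2: "((\<lambda>w. g t0 * P * w powi (t0 $ j) + B) has_field_derivative
      g t0 * P * (of_int (t0 $ j) * (z $ j) powi (t0 $ j - 1) * 1)) (at (z $ j))"
    using zn by (auto intro!: derivative_eq_intros)
  have "(\<lambda>w. laurent_eval g (\<chi> k. if k = j then w else z $ k)) = (\<lambda>w. g t0 * P * w powi (t0 $ j) + B)"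
    using eq by auto
  with D D2 have "g t0 * P * (of_int (t0 $ j) * (z $ j) powi (t0 $ j - 1) * 1) = 0"
    using DERIV_unique by metis
  moreover have "g t0 \<noteq> 0" using t0 by (simp add: lsupp_def)
  moreover have "P \<noteq> 0" unfolding P_def using zn by simp
  ultimately show False using nz zn by simp
qed

lemma convex_sub_sum:
  fixes C :: "'a::real_vector set"
  assumes "finite A" "convex C" "0 \<in> C" "\<And>i. i \<in> A \<Longrightarrow> x i \<in> C"
    "\<And>i. i \<in> A \<Longrightarrow> w i \<ge> 0" "sum w A \<le> 1"
  shows "(\<Sum>i\<in>A. w i *\<^sub>R x i) \<in> C"
proof (cases "sum w A = 0")
  case True
  then have "\<forall>i\<in>A. w i = 0" using assms sum_nonneg_eq_0_iff by blast
  then show ?thesis using assms by simp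
next
  case False
  define W where "W = sum w A"
  have W: "W > 0" using False assms sum_nonneg unfolding W_def by (metis order_le_less)
  have "(\<Sum>i\<in>A. (w i / W) *\<^sub>R x i) \<in> C"
    apply (rule convex_sum[OF assms(1,2)])
    using assms W by (auto simp: W_def sum_divide_distrib[symmetric])
  then have "W *\<^sub>R (\<Sum>i\<in>A. (w i / W) *\<^sub>R x i) + (1 - W) *\<^sub>R 0 \<in> C"
    using assms W convexD[OF assms(2)] W_def by (metis less_imp_le diff_ge_0_iff_ge add.commute le_add_diff_inverse)
  moreover have "W *\<^sub>R (\<Sum>i\<in>A. (w i / W) *\<^sub>R x i) = (\<Sum>i\<in>A. w i *\<^sub>R x i)"
    using W by (simp add: scaleR_sum_right)
  ultimately show ?thesis by simp
qed

definition Ev :: "nat \<Rightarrow> 'n::finite \<Rightarrow> int^'n" where "Ev d j = (\<chi> k. if k = j then int d else 0)"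
definition Qv :: "nat \<Rightarrow> int^'n::finite" where "Qv d = (\<chi> k. - int d)"
definition pv :: "nat \<Rightarrow> 'n::finite \<Rightarrow> real^'n" where "pv d j = (\<chi> k. if k = j then real d else 0)"
definition qv :: "nat \<Rightarrow> real^'n::finite" where "qv d = (\<chi> k. - real d)"

lemma Ev_ne_Qv: "d \<ge> 1 \<Longrightarrow> Ev d j \<noteq> Qv d"
  by (auto simp: Ev_def Qv_def vec_eq_iff)

lemma coeff_E: "d \<ge> 1 \<Longrightarrow> f_coeff d a (Ev d j) = 1"
  using Ev_ne_Qv[of d j] unfolding f_coeff_def by (auto simp: Ev_def Qv_def)

lemma coeff_Q: "d \<ge> 1 \<Longrightarrow> f_coeff d a (Qv d :: int^'n::finite) = a"
proof -
  assume d: "d \<ge> 1"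
  have "\<not> (\<exists>j. (Qv d :: int^'n) = (\<chi> k. if k = j then int d else 0))"
    using Ev_ne_Qv[OF d] by (metis Ev_def)
  then show ?thesis unfolding f_coeff_def by (simp add: Qv_def)
qed

lemma supp_f: "d \<ge> 1 \<Longrightarrow> a \<noteq> 0 \<Longrightarrow> lsupp (f_coeff d a :: int^'n::finite \<Rightarrow> complex) = insert (Qv d) (range (Ev d))"
  unfolding lsupp_def using coeff_E[of d a] coeff_Q[of d a]
  by (auto simp: f_coeff_def Ev_def Qv_def split: if_splits)

lemma lat_E: "lat_to_real (Ev d j) = pv d j"
  by (auto simp: lat_to_real_def Ev_def pv_def vec_eq_iff)
lemma lat_Q: "lat_to_real (Qv d :: int^'n::finite) = qv d"
  by (auto simp: lat_to_real_def Qv_def qv_def vec_eq_iff)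

lemma NP_f: "d \<ge> 1 \<Longrightarrow> a \<noteq> 0 \<Longrightarrow> newton_polytope (f_coeff d a :: int^'n::finite \<Rightarrow> complex)
   = convex hull (insert 0 (insert (qv d) (range (pv d))))"
  unfolding newton_polytope_def supp_f by (simp add: image_image lat_E lat_Q)

definition Hset :: "nat \<Rightarrow> nat \<Rightarrow> (real^'n::finite) set" where
  "Hset d n = {u :: real^'n. (\<Sum>i\<in>UNIV. u $ i) \<le> real d \<and>
            (\<forall>i0. (\<Sum>i\<in>UNIV. u $ i) - real n * u $ i0 \<le> real d)}"

lemma convex_Hset: "convex (Hset d n)"
  unfolding convex_def Hset_def
proof (clarsimp)
  fix x y :: "real^'a" and u v :: real
  assume x1: "(\<Sum>i\<in>UNIV. x $ i) \<le> real d" and x2: "\<forall>i0. (\<Sum>i\<in>UNIV. x $ i) - real n * x $ i0 \<le> real d"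
    and y1: "(\<Sum>i\<in>UNIV. y $ i) \<le> real d" and y2: "\<forall>i0. (\<Sum>i\<in>UNIV. y $ i) - real n * y $ i0 \<le> real d"
    and u: "0 \<le> u" and v: "0 \<le> v" and uv: "u + v = 1"
  have s: "(\<Sum>i\<in>UNIV. u * x $ i + v * y $ i) = u * (\<Sum>i\<in>UNIV. x $ i) + v * (\<Sum>i\<in>UNIV. y $ i)"
    by (simp add: sum.distrib sum_distrib_left)
  have "u * (\<Sum>i\<in>UNIV. x $ i) + v * (\<Sum>i\<in>UNIV. y $ i) \<le> u * real d + v * real d"
    using x1 y1 u v by (intro add_mono mult_left_mono) auto
  then have A: "(\<Sum>i\<in>UNIV. u * x $ i + v * y $ i) \<le> real d" using s uv by (simp add: distrib_right[symmetric])
  have B: "(\<Sum>i\<in>UNIV. u * x $ i + v * y $ i) - real n * (u * x $ i0 + v * y $ i0) \<le> real d" for i0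
  proof -
    have "(\<Sum>i\<in>UNIV. u * x $ i + v * y $ i) - real n * (u * x $ i0 + v * y $ i0)
        = u * ((\<Sum>i\<in>UNIV. x $ i) - real n * x $ i0) + v * ((\<Sum>i\<in>UNIV. y $ i) - real n * y $ i0)"
      using s by (simp add: algebra_simps)
    also have "\<dots> \<le> u * real d + v * real d"
      using x2 y2 u v by (intro add_mono mult_left_mono) auto
    finally show ?thesis using uv by (simp add: distrib_right[symmetric])
  qed
  show "(\<Sum>i\<in>UNIV. u * x $ i + v * y $ i) \<le> real d \<and>
       (\<forall>i0. (\<Sum>i\<in>UNIV. u * x $ i + v * y $ i) - real n * (u * x $ i0 + v * y $ i0) \<le> real d)"
    using A B by blast
qed

lemma sum_pv: "(\<Sum>i\<in>UNIV. pv d j $ i) = real d"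
  by (simp add: pv_def)

lemma sum_qv: "(\<Sum>i\<in>UNIV. (qv d :: real^'n::finite) $ i) = - real CARD('n) * real d"
  by (simp add: qv_def)

lemma hull_sub: assumes "n = CARD('n::finite) + 1"
  shows "convex hull (insert 0 (insert (qv d) (range (pv d)))) \<subseteq> (Hset d n :: (real^'n) set)"
proof (rule hull_minimal[where S=convex, OF _ convex_Hset])
  have "pv d j \<in> (Hset d n :: (real^'n) set)" for j
    unfolding Hset_def by (simp add: sum_pv, simp add: pv_def)
  moreover have "qv d \<in> (Hset d n :: (real^'n) set)"
    unfolding Hset_def using assms by (simp add: sum_qv, simp add: qv_def algebra_simps, smt (verit) of_nat_0_le_iff zero_le_mult_iff)
  moreover have "0 \<in> (Hset d n :: (real^'n) set)"
    unfolding Hset_def by simp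
  ultimately show "insert 0 (insert (qv d) (range (pv d))) \<subseteq> (Hset d n :: (real^'n) set)" by auto
qed

lemma sum_option_UNIV: "sum f (UNIV :: 'a::finite option set) = f None + (\<Sum>j\<in>UNIV. f (Some j))"
proof -
  have "sum f (UNIV :: 'a option set) = sum f (insert None (range Some))"
    by (simp add: UNIV_option_conv[symmetric])
  also have "\<dots> = f None + sum f (range Some)" by (subst sum.insert) auto
  also have "sum f (range Some) = (\<Sum>j\<in>UNIV. f (Some j))" by (subst sum.reindex) auto
  finally show ?thesis .
qed

lemma hull_sup: assumes n: "n = CARD('n::finite) + 1" and d: "d \<ge> 1"
  shows "(Hset d n :: (real^'n) set) \<subseteq> convex hull (insert 0 (insert (qv d) (range (pv d))))"
proof
  fix u :: "real^'n" assume "u \<in> Hset d n"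
  then have h1: "(\<Sum>i\<in>UNIV. u $ i) \<le> real d" and h2: "\<And>i0. (\<Sum>i\<in>UNIV. u $ i) - real n * u $ i0 \<le> real d"
    unfolding Hset_def by auto
  define s where "s = (\<Sum>i\<in>UNIV. u $ i)"
  define M where "M = Max (range (\<lambda>j. - u $ j / real d))"
  define mu where "mu = max 0 M"
  have dpos: "real d > 0" using d by simp
  have mu0: "mu \<ge> 0" unfolding mu_def by simp
  have muj: "mu \<ge> - u $ j / real d" for j
    unfolding mu_def M_def by (rule order_trans[OF _ max.cobounded2]) (rule Max_ge, auto)
  have mucases: "mu = 0 \<or> (\<exists>i0. mu = - u $ i0 / real d)"
  proof -
    have "M \<in> range (\<lambda>j. - u $ j / real d)" unfolding M_def by (rule Max_in) auto
    then show ?thesis unfolding mu_def by (auto simp: max_def)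
  qed
  define w :: "'n option \<Rightarrow> real" where "w = (\<lambda>i. case i of None \<Rightarrow> mu | Some j \<Rightarrow> u $ j / real d + mu)"
  define x :: "'n option \<Rightarrow> real^'n" where "x = (\<lambda>i. case i of None \<Rightarrow> qv d | Some j \<Rightarrow> pv d j)"
  have wnn: "w i \<ge> 0" for i
    using mu0 muj unfolding w_def by (cases i) (auto, smt (verit) muj)
  have sw: "sum w UNIV = s / real d + real n * mu"
    unfolding sum_option_UNIV w_def s_def using n by (simp add: sum.distrib sum_divide_distrib algebra_simps)
  have sw1: "sum w UNIV \<le> 1"
    using mucases
  proof
    assume "mu = 0" then show ?thesis using sw h1 dpos unfolding s_def by (simp add: divide_le_eq_1)
  next
    assume "\<exists>i0. mu = - u $ i0 / real d"
    then obtain i0 where "mu = - u $ i0 / real d" by blast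
    then have "mu * real d = - u $ i0" using dpos by simp
    then have "sum w UNIV * real d = s - real n * u $ i0"
    proof -
      have "sum w UNIV * real d = s + real n * (mu * real d)" using sw dpos by (simp add: algebra_simps)
      then show ?thesis using \<open>mu * real d = - u $ i0\<close> by simp
    qed
    then have "sum w UNIV = (s - real n * u $ i0) / real d" using dpos by (simp add: field_simps)
    then show ?thesis using h2[of i0] dpos unfolding s_def by (simp add: divide_le_eq_1)
  qed
  have ueq: "(\<Sum>i\<in>UNIV. w i *\<^sub>R x i) = u"
  proof (subst vec_eq_iff, intro allI)
    fix k
    have "(\<Sum>i\<in>UNIV. w i *\<^sub>R x i) $ k = mu * (- real d) + (\<Sum>j\<in>UNIV. (u $ j / real d + mu) * (if k = j then real d else 0))"
      unfolding sum_component sum_option_UNIV w_def x_def by (simp add: qv_def pv_def)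
    also have "\<dots> = mu * (- real d) + (u $ k / real d + mu) * real d"
      by (simp add: if_distrib[where f="\<lambda>t. _ * t"] cong: if_cong)
    also have "\<dots> = u $ k" using dpos by (simp add: field_simps)
    finally show "(\<Sum>i\<in>UNIV. w i *\<^sub>R x i) $ k = u $ k" .
  qed
  have "(\<Sum>i\<in>UNIV. w i *\<^sub>R x i) \<in> convex hull (insert 0 (insert (qv d) (range (pv d))))"
    apply (rule convex_sub_sum)
    using wnn sw1 by (auto simp: x_def hull_inc split: option.splits)
  then show "u \<in> convex hull (insert 0 (insert (qv d) (range (pv d))))" using ueq by simp
qed

lemma zero_interior: assumes n: "n = CARD('n::finite) + 1" and d: "d \<ge> 1"
  shows "(0::real^'n) \<in> interior (Hset d n)"
proof -
  define e where "e = real d / (2 * real n)"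
  have npos: "real n > 0" using n by simp
  have epos: "e > 0" unfolding e_def using d npos by simp
  have "ball 0 e \<subseteq> (Hset d n :: (real^'n) set)"
  proof
    fix u :: "real^'n" assume "u \<in> ball 0 e"
    then have nu: "norm u < e" by simp
    have ci: "\<bar>u $ i\<bar> \<le> norm u" for i by (rule component_le_norm_cart)
    have "\<bar>\<Sum>i\<in>UNIV. u $ i\<bar> \<le> (\<Sum>i\<in>UNIV. \<bar>u $ i\<bar>)" by (rule sum_abs)
    also have "\<dots> \<le> of_nat (card (UNIV::'n set)) * norm u" by (rule sum_bounded_above) (rule ci)
    finally have sb: "\<bar>\<Sum>i\<in>UNIV. u $ i\<bar> \<le> real CARD('n) * norm u" by simp
    have cn: "real CARD('n) = real n - 1" using n by simp
    have ne: "real n * e = real d / 2" unfolding e_def using npos by simp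
    have A: "real CARD('n) * norm u \<le> real n * e"
      proof -
      have "real CARD('n) * norm u \<le> real CARD('n) * e" using nu by (intro mult_left_mono) auto
      also have "\<dots> \<le> real n * e" using cn epos by (intro mult_right_mono) auto
      finally show ?thesis .
    qed
    have B: "\<bar>real n * u $ i0\<bar> \<le> real n * e" for i0
      using ci[of i0] nu npos by (simp add: abs_mult)
    have dd: "real d / 2 < real d" using d by simp
    have C1: "(\<Sum>i\<in>UNIV. u $ i) \<le> real d" using sb A ne dd by linarith
    have C2: "(\<Sum>i\<in>UNIV. u $ i) - real n * u $ i0 \<le> real d" for i0
      using sb A ne dd B[of i0] by linarith
    show "u \<in> Hset d n"
      unfolding Hset_def using C1 C2 by blast
  qed
  then show ?thesis using epos by (meson mem_interior)
qed

lemma lsupp_face: "lsupp (face_part c \<sigma>) = {t \<in> lsupp c. lat_to_real t \<in> \<sigma>}"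
  by (auto simp: lsupp_def face_part_def)

lemma not_all_in: assumes n: "n = CARD('n::finite) + 1" and cv: "convex \<sigma>"
  and q: "qv d \<in> \<sigma>" and p: "\<forall>j. pv d j \<in> (\<sigma> :: (real^'n) set)"
  shows "0 \<in> \<sigma>"
proof -
  define N where "N = real CARD('n)"
  have Npos: "N > 0" unfolding N_def by simp
  have m: "(\<Sum>j\<in>UNIV. (1 / N) *\<^sub>R pv d j) \<in> \<sigma>"
    by (rule convex_sum[OF _ cv]) (use p Npos in \<open>auto simp: N_def\<close>)
  have mv: "(\<Sum>j\<in>UNIV. (1 / N) *\<^sub>R pv d j) = (\<chi> k. real d / N)"
    by (simp add: vec_eq_iff pv_def N_def sum_divide_distrib[symmetric])
  have "(1 / real n) *\<^sub>R qv d + (N / real n) *\<^sub>R (\<Sum>j\<in>UNIV. (1 / N) *\<^sub>R pv d j) \<in> \<sigma>"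
    apply (rule convexD[OF cv q m])
    using n Npos by (auto simp: N_def field_simps)
  moreover have "(1 / real n) *\<^sub>R qv d + (N / real n) *\<^sub>R (\<Sum>j\<in>UNIV. (1 / N) *\<^sub>R pv d j) = (0 :: real^'n)"
    unfolding mv using Npos n by (simp add: vec_eq_iff qv_def field_simps)
  ultimately show ?thesis by simp
qed

lemma nondeg: assumes n: "n = CARD('n::finite) + 1" and d: "d \<ge> 1" and a: "a \<noteq> 0"
  shows "nondegenerate (f_coeff d a :: int^'n \<Rightarrow> complex)"
  unfolding nondegenerate_def
proof (intro allI impI notI)
  fix \<sigma> :: "(real^'n) set"
  let ?c = "f_coeff d a :: int^'n \<Rightarrow> complex"
  let ?V = "insert 0 (insert (qv d) (range (pv d))) :: (real^'n) set"
  assume H: "\<sigma> face_of newton_polytope ?c \<and> \<sigma> \<noteq> {} \<and> 0 \<notin> \<sigma>"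
  assume "\<exists>z. critical_point_torus (face_part ?c \<sigma>) z"
  then obtain z where zn: "\<forall>k. z $ k \<noteq> 0" and
    zd: "\<And>j. ((\<lambda>w. laurent_eval (face_part ?c \<sigma>) (\<chi> k. if k = j then w else z $ k)) has_field_derivative 0) (at (z $ j))"
    unfolding critical_point_torus_def by blast
  have face: "\<sigma> face_of convex hull ?V" using H unfolding NP_f[OF d a] by blast
  have cv: "convex \<sigma>" using face face_of_imp_convex by blast
  obtain S' where S': "S' \<subseteq> ?V" "\<sigma> = convex hull S'"
    using face_of_convex_hull_subset[OF finite_imp_compact face] by auto
  have "S' \<noteq> {}" using H S' by auto
  moreover have "0 \<notin> S'" using H S' hull_inc by metis
  ultimately obtain x where x: "x \<in> S'" "x \<noteq> 0" by (metis all_not_in_conv)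
  have xs: "x \<in> \<sigma>" using x S' hull_inc by metis
  have some: "qv d \<in> \<sigma> \<or> (\<exists>j. pv d j \<in> \<sigma>)"
  proof -
    have "x = qv d \<or> x \<in> range (pv d)" using x S' by blast
    then show ?thesis using xs by blast
  qed
  have notall: "\<not> (qv d \<in> \<sigma> \<and> (\<forall>j. pv d j \<in> \<sigma>))" using not_all_in[OF n cv] H by metis
  define g where "g = face_part ?c \<sigma>"
  have lg: "lsupp g = {t \<in> insert (Qv d) (range (Ev d)). lat_to_real t \<in> \<sigma>}"
    unfolding g_def lsupp_face supp_f[OF d a] by simp
  have fin: "finite (lsupp g)" unfolding lg by simp
  have Ecomp: "Ev d k $ j = (if k = j then int d else 0)" for k j by (simp add: Ev_def)
  have Qcomp: "(Qv d :: int^'n) $ j = - int d" for j by (simp add: Qv_def)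
  show False
  proof (cases "qv d \<in> \<sigma>")
    case False
    then obtain j where j: "pv d j \<in> \<sigma>" using some by blast
    have t0: "Ev d j \<in> lsupp g" unfolding lg using j by (simp add: lat_E)
    have oth: "\<forall>t\<in>lsupp g - {Ev d j}. t $ j = 0"
      unfolding lg using False by (auto simp: lat_Q Ecomp split: if_splits)
    show False using deriv_single[OF fin t0 oth _ zn] zd[of j] d unfolding g_def by (simp add: Ecomp)
  next
    case True
    then obtain j where j: "pv d j \<notin> \<sigma>" using notall by blast
    have t0: "Qv d \<in> lsupp g" unfolding lg using True by (simp add: lat_Q)
    have oth: "\<forall>t\<in>lsupp g - {Qv d}. t $ j = 0"
      unfolding lg using j by (auto simp: lat_E Ecomp split: if_splits)
    show False using deriv_single[OF fin t0 oth _ zn] zd[of j] d unfolding g_def by (simp add: Qcomp)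
  qed
qed

theorem lemma2p5:
  fixes d :: nat and a :: complex and n :: nat
  assumes "n = CARD('n::finite) + 1"
    and "d \<ge> 1" and "a \<noteq> 0"
  shows "convenient (f_coeff d a :: int^'n \<Rightarrow> complex)
     \<and> newton_polytope (f_coeff d a :: int^'n \<Rightarrow> complex) =
         {u :: real^'n. (\<Sum>i\<in>UNIV. u $ i) \<le> real d \<and>
            (\<forall>i0. (\<Sum>i\<in>UNIV. u $ i) - real n * u $ i0 \<le> real d)}
     \<and> nondegenerate (f_coeff d a :: int^'n \<Rightarrow> complex)"
proof -
  have NP: "newton_polytope (f_coeff d a :: int^'n \<Rightarrow> complex) = (Hset d n :: (real^'n) set)"
    unfolding NP_f[OF assms(2,3)] using hull_sub[OF assms(1)] hull_sup[OF assms(1,2)] by blast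
  have "convenient (f_coeff d a :: int^'n \<Rightarrow> complex)"
    unfolding convenient_def NP using zero_interior[OF assms(1,2)] .
  moreover have "nondegenerate (f_coeff d a :: int^'n \<Rightarrow> complex)" by (rule nondeg[OF assms])
  ultimately show ?thesis using NP unfolding Hset_def by blast
qed

end
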